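(* Let $\langle a\rangle$ and $\langle b\rangle$ be cyclic groups of orders $2^{\alpha}$ and $2^{\beta}$ respectively, with $\alpha\geq\beta\geq 1$, let $G=\langle a\rangle\amalg^{\mathfrak{N}_3}\langle b\rangle$ be their $3$-nilpotent product, and let $\gamma$ be an integer with $1\leq\gamma<\beta$. Let $N$ be the (central) subgroup of $G$ generated by $[a,b,a]^{2^{\gamma}}=[a,b]^{-2^{\gamma+1}}[a^2,b]^{2^{\gamma}}$ and $[a,b,b]^{2^{\gamma}}=[a,b]^{-2^{\gamma+1}}[a,b^2]^{2^{\gamma}}$, and let $K=G/N$. Then every element of $K$ can be written uniquely as $k=a^rb^s[a,b]^t[a,b,a]^u[a,b,b]^v$ (writing $a$ for $aN$, etc.), where $r$ is unique modulo $2^{\alpha}$, $s$ and $t$ are unique modulo $2^{\beta}$, and $u$ and $v$ are unique modulo $2^{\gamma}$.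
   Context: For cyclic groups $A_1,A_2$, their $3$-nilpotent product $A_1\amalg^{\mathfrak{N}_3}A_2$ is $F/F_4$, where $F=A_1*A_2$ is the free product and $F_4$ is the fourth term of the lower central series of $F$. Commutators are $[x,y]=x^{-1}y^{-1}xy$, left-normed: $[x,y,z]=[[x,y],z]$. *)

theory Defs
  imports "HOL-Algebra.Algebra"
begin

definition comm :: "('a, 'b) monoid_scheme \<Rightarrow> 'a \<Rightarrow> 'a \<Rightarrow> 'a" where
  "comm G x y = inv\<^bsub>G\<^esub> x \<otimes>\<^bsub>G\<^esub> inv\<^bsub>G\<^esub> y \<otimes>\<^bsub>G\<^esub> x \<otimes>\<^bsub>G\<^esub> y"

fun lcs :: "('a, 'b) monoid_scheme \<Rightarrow> nat \<Rightarrow> 'a set" where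
  "lcs G 0 = carrier G"
| "lcs G (Suc 0) = carrier G"
| "lcs G (Suc (Suc n)) =
     generate G {comm G x y | x y. x \<in> lcs G (Suc n) \<and> y \<in> carrier G}"

definition nilpotent_class_le :: "('a, 'b) monoid_scheme \<Rightarrow> nat \<Rightarrow> bool" where
  "nilpotent_class_le G c \<longleftrightarrow> lcs G (Suc c) = {\<one>\<^bsub>G\<^esub>}"

text \<open>G, with distinguished elements a and b, is the 3-nilpotent product
  of cyclic groups of orders m and n, i.e. (Z_m * Z_n)/F_4 with a, b the images of
  the generators.  The test groups H are taken
  with carrier type nat; this suffices since all the relevant (finite) groups embed
  into that type.\<close>
definition is_3nilpotent_product ::
    "('a, 'b) monoid_scheme \<Rightarrow> 'a \<Rightarrow> 'a \<Rightarrow> nat \<Rightarrow> nat \<Rightarrow> bool" where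
  "is_3nilpotent_product G a b m n \<longleftrightarrow>
     group G \<and> a \<in> carrier G \<and> b \<in> carrier G \<and>
     a [^]\<^bsub>G\<^esub> m = \<one>\<^bsub>G\<^esub> \<and> b [^]\<^bsub>G\<^esub> n = \<one>\<^bsub>G\<^esub> \<and>
     generate G {a, b} = carrier G \<and>
     nilpotent_class_le G 3 \<and>
     (\<forall>(H :: nat monoid) x y.
        group H \<and> nilpotent_class_le H 3 \<and> x \<in> carrier H \<and> y \<in> carrier H \<and>
        x [^]\<^bsub>H\<^esub> m = \<one>\<^bsub>H\<^esub> \<and> y [^]\<^bsub>H\<^esub> n = \<one>\<^bsub>H\<^esub> \<longrightarrow>
        (\<exists>h \<in> hom G H. h a = x \<and> h b = y))"

end

theory Submission
  imports Defs "HOL-Library.Countable"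
begin


definition tri :: "int \<Rightarrow> int" where "tri n = n * (n - 1) div 2"

lemma tri2: "2 * tri n = n * (n - 1)"
proof -
  have "even (n * (n - 1))" by simp
  then show ?thesis unfolding tri_def by simp
qed

lemma tri_add: "tri (a + b) = tri a + tri b + a * b"
proof -
  have "2 * tri (a + b) = 2 * (tri a + tri b + a * b)"
    unfolding distrib_left tri2 by (simp add: algebra_simps)
  then show ?thesis by simp
qed

lemma tri_0[simp]: "tri 0 = 0" by (simp add: tri_def)
lemma tri_1[simp]: "tri 1 = 0" by (simp add: tri_def)
lemma tri_neg: "tri (- a) = tri a + a"
proof -
  have "2 * tri (- a) = 2 * (tri a + a)"
    unfolding distrib_left tri2 by (simp add: algebra_simps)
  then show ?thesis by simp
qed

lemma int_equiv_induct:
  fixes P :: "int \<Rightarrow> bool"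
  assumes "P 0" "\<And>n. P n \<longleftrightarrow> P (n + 1)"
  shows "P n"
proof (rule int_induct[of P 0 n])
  show "P 0" using assms by simp
next
  fix i assume "P i" then show "P (i + 1)" using assms by blast
next
  fix i assume "P i" then show "P (i - 1)" using assms(2)[of "i - 1"] by simp
qed

context group begin

lemma cancel1[simp]: "x \<in> carrier G \<Longrightarrow> z \<in> carrier G \<Longrightarrow> x \<otimes> (inv x \<otimes> z) = z"
  by (simp flip: m_assoc)
lemma cancel2[simp]: "x \<in> carrier G \<Longrightarrow> z \<in> carrier G \<Longrightarrow> inv x \<otimes> (x \<otimes> z) = z"
  by (simp flip: m_assoc)

lemma comm_closed[simp]: "x \<in> carrier G \<Longrightarrow> y \<in> carrier G \<Longrightarrow> comm G x y \<in> carrier G"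
  by (simp add: comm_def)

lemma comm_eq: "x \<in> carrier G \<Longrightarrow> y \<in> carrier G \<Longrightarrow> x \<otimes> y = y \<otimes> x \<otimes> comm G x y"
  by (simp add: comm_def m_assoc)


definition central :: "'a \<Rightarrow> bool" where
  "central k \<longleftrightarrow> k \<in> carrier G \<and> (\<forall>g\<in>carrier G. k \<otimes> g = g \<otimes> k)"

lemma centralD: "central k \<Longrightarrow> g \<in> carrier G \<Longrightarrow> k \<otimes> g = g \<otimes> k"
  by (simp add: central_def)

lemma central_carrier: "central k \<Longrightarrow> k \<in> carrier G"
  by (simp add: central_def)

lemma central_inv: "central k \<Longrightarrow> central (inv k)"
proof -
  assume k: "central k"
  have kc: "k \<in> carrier G" using k by (simp add: central_def)
  have "inv k \<otimes> g = g \<otimes> inv k" if g: "g \<in> carrier G" for g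
  proof -
    have "inv k \<otimes> g = inv k \<otimes> (g \<otimes> k) \<otimes> inv k" using kc g by (simp add: m_assoc)
    also have "\<dots> = inv k \<otimes> (k \<otimes> g) \<otimes> inv k" using k g by (simp add: centralD)
    also have "\<dots> = g \<otimes> inv k" using kc g by (simp add: m_assoc)
    finally show ?thesis .
  qed
  then show ?thesis using kc by (simp add: central_def)
qed

lemma central_mult: "central k \<Longrightarrow> central l \<Longrightarrow> central (k \<otimes> l)"
proof -
  assume k: "central k" and l: "central l"
  have kc: "k \<in> carrier G" "l \<in> carrier G" using k l by (auto simp add: central_def)
  have "k \<otimes> l \<otimes> g = g \<otimes> (k \<otimes> l)" if g: "g \<in> carrier G" for g
  proof -
    have "k \<otimes> l \<otimes> g = k \<otimes> (g \<otimes> l)" using kc g l by (simp add: m_assoc centralD)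
    also have "\<dots> = (k \<otimes> g) \<otimes> l" using kc g by (simp add: m_assoc)
    also have "\<dots> = g \<otimes> (k \<otimes> l)" using kc g k by (simp add: m_assoc centralD)
    finally show ?thesis .
  qed
  then show ?thesis using kc by (simp add: central_def)
qed

lemma central_one: "central \<one>" by (simp add: central_def)

lemma central_natpow: "central k \<Longrightarrow> central (k [^] (n::nat))"
  by (induct n) (auto intro: central_mult central_one)

lemma central_pow: "central k \<Longrightarrow> central (k [^] (n::int))"
  unfolding int_pow_def2[of G k n] by (simp add: central_natpow central_inv del: pow_nat)

lemma central_swap: "central k \<Longrightarrow> g \<in> carrier G \<Longrightarrow> x \<in> carrier G \<Longrightarrow> g \<otimes> (k \<otimes> x) = k \<otimes> (g \<otimes> x)"
proof -
  assume k: "central k" and g: "g \<in> carrier G" and x: "x \<in> carrier G"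
  have kc: "k \<in> carrier G" using k by (simp add: central_def)
  have "g \<otimes> (k \<otimes> x) = (g \<otimes> k) \<otimes> x" using kc g x by (simp add: m_assoc)
  also have "\<dots> = (k \<otimes> g) \<otimes> x" using k g by (simp add: centralD)
  finally show ?thesis using kc g x by (simp add: m_assoc)
qed

lemma pow_1_plus: "z \<in> carrier G \<Longrightarrow> z [^] (n + 1 :: int) = z \<otimes> z [^] n"
  using int_pow_mult[of z 1 n] by (simp add: add.commute)

lemma pow_swap:
  assumes z: "z \<in> carrier G" and y: "y \<in> carrier G" and k: "central (comm G z y)"
  shows "z [^] (n::int) \<otimes> y = y \<otimes> z [^] n \<otimes> (comm G z y) [^] n"
proof (induct n rule: int_equiv_induct)
  case 1 then show ?case using y by simp
next
  case (2 n)
  define k where "k = comm G z y"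
  have kc: "k \<in> carrier G" using k central_carrier k_def by blast
  have yz: "y \<otimes> z = z \<otimes> y \<otimes> inv k"
    using comm_eq[OF z y] z y kc by (simp add: k_def m_assoc)
  have zk: "z [^] n \<otimes> k = k \<otimes> z [^] n" using centralD[OF k, of "z [^] n"] z k_def by simp
  have "y \<otimes> z [^] (n + 1) \<otimes> k [^] (n + 1) = (y \<otimes> z) \<otimes> z [^] n \<otimes> (k \<otimes> k [^] n)"
    using z y kc by (simp add: pow_1_plus m_assoc)
  also have "\<dots> = z \<otimes> y \<otimes> (inv k \<otimes> (z [^] n \<otimes> k)) \<otimes> k [^] n"
    using z y kc by (simp add: yz m_assoc)
  also have "\<dots> = z \<otimes> (y \<otimes> z [^] n \<otimes> k [^] n)"
    using z y kc by (simp add: zk m_assoc)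
  finally have R: "y \<otimes> z [^] (n + 1) \<otimes> k [^] (n + 1) = z \<otimes> (y \<otimes> z [^] n \<otimes> k [^] n)" .
  have L: "z [^] (n + 1) \<otimes> y = z \<otimes> (z [^] n \<otimes> y)" using z y by (simp add: pow_1_plus m_assoc)
  show ?case unfolding L R[unfolded k_def] using z y kc[unfolded k_def] by simp
qed

lemma comm_prod: "x \<in> carrier G \<Longrightarrow> u \<in> carrier G \<Longrightarrow> v \<in> carrier G \<Longrightarrow>
   comm G x (u \<otimes> v) = comm G x v \<otimes> (inv v \<otimes> comm G x u \<otimes> v)"
  by (simp add: comm_def m_assoc inv_mult_group)

end

locale c3 = group G for G (structure) +
  assumes cen3: "x \<in> carrier G \<Longrightarrow> y \<in> carrier G \<Longrightarrow> z \<in> carrier G \<Longrightarrow> central (comm G (comm G x y) z)"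
begin

lemma comm_pow_right:
  assumes x: "x \<in> carrier G" and y: "y \<in> carrier G"
  shows "comm G x (y [^] (s::int)) = comm G x y [^] s \<otimes> comm G (comm G x y) y [^] tri s"
proof (induct s rule: int_equiv_induct)
  case 1 then show ?case by (simp add: comm_def x)
next
  case (2 s)
  define c where "c = comm G x y"
  define e where "e = comm G c y"
  have cc: "c \<in> carrier G" and ec: "e \<in> carrier G" using x y by (auto simp: c_def e_def)
  have ecen: "central e" unfolding e_def c_def using cen3 x y by simp
  have ecenp: "central (e [^] (i::int))" for i using central_pow[OF ecen] .
  have ps: "c [^] s \<otimes> y = y \<otimes> (c [^] s \<otimes> e [^] s)"
    using pow_swap[OF cc y, of s] ecen cc y ec unfolding e_def[symmetric] by (simp add: m_assoc)
  have conj: "inv y \<otimes> c [^] s \<otimes> y = c [^] s \<otimes> e [^] s"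
    using cc y ec by (simp add: m_assoc ps)
  have conj2: "inv y \<otimes> w \<otimes> y = w" if "central w" for w
    using that y by (simp add: centralD[OF that y] central_carrier[OF that] m_assoc)
  have "comm G x (y [^] (s + 1)) = c \<otimes> (inv y \<otimes> comm G x (y [^] s) \<otimes> y)"
    using x y by (simp add: int_pow_mult comm_prod c_def)
  moreover have "c [^] (s + 1) \<otimes> e [^] tri (s + 1) = c \<otimes> (inv y \<otimes> (c [^] s \<otimes> e [^] tri s) \<otimes> y)"
  proof -
    have "inv y \<otimes> (c [^] s \<otimes> e [^] tri s) \<otimes> y = (inv y \<otimes> c [^] s \<otimes> y) \<otimes> (inv y \<otimes> e [^] tri s \<otimes> y)"
      using y cc ec by (simp add: m_assoc)
    also have "\<dots> = c [^] s \<otimes> e [^] s \<otimes> e [^] tri s"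
      unfolding conj conj2[OF ecenp] by simp
    moreover have "tri (s + 1) = s + tri s" by (simp add: tri_add)
    then have "e [^] tri (s + 1) = e [^] s \<otimes> e [^] tri s" using ec by (simp add: int_pow_mult del: pow_nat)
    ultimately show ?thesis using cc ec
      by (simp add: pow_1_plus m_assoc del: pow_nat)
  qed
  ultimately show ?case
    using x y cc ec by (simp add: c_def e_def)
qed


lemma ctx: "x \<otimes> y = z \<Longrightarrow> x \<in> carrier G \<Longrightarrow> y \<in> carrier G \<Longrightarrow> q \<in> carrier G \<Longrightarrow>
  x \<otimes> (y \<otimes> q) = z \<otimes> q"
  by (simp add: m_assoc[symmetric])

lemma comm_inv_swap: "x \<in> carrier G \<Longrightarrow> y \<in> carrier G \<Longrightarrow> comm G y x = inv (comm G x y)"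
  by (simp add: comm_def inv_mult_group m_assoc)

end

locale c3ab = c3 +
  fixes a b
  assumes a: "a \<in> carrier G" and b: "b \<in> carrier G"
begin

definition "cc = comm G a b"
definition "dd = comm G cc a"
definition "ee = comm G cc b"

lemma cc_c[simp]: "cc \<in> carrier G" and dd_c[simp]: "dd \<in> carrier G" and ee_c[simp]: "ee \<in> carrier G"
  using a b by (auto simp: cc_def dd_def ee_def)

lemma dd_cen: "central (dd [^] (i::int))" and ee_cen: "central (ee [^] (i::int))"
  using cen3[OF a b a] cen3[OF a b b] central_pow unfolding dd_def ee_def cc_def by auto

definition W :: "int \<Rightarrow> int \<Rightarrow> int \<Rightarrow> int \<Rightarrow> int \<Rightarrow> 'a" where
  "W r s t u v = a [^] r \<otimes> b [^] s \<otimes> cc [^] t \<otimes> dd [^] u \<otimes> ee [^] v"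

lemma W_c[simp]: "W r s t u v \<in> carrier G"
  using a b by (simp add: W_def)

lemma W_mult_b: "W r s t u v \<otimes> b = W r (s + 1) t u (v + t)"
proof -
  have sw1: "cc [^] t \<otimes> b = b \<otimes> (cc [^] t \<otimes> ee [^] t)"
    using pow_swap[OF cc_c b, of t] b ee_cen[of 1] by (simp add: ee_def m_assoc)
  have e1: "ee [^] v \<otimes> b = b \<otimes> ee [^] v" using centralD[OF ee_cen b] .
  have d1: "dd [^] u \<otimes> (b \<otimes> q) = b \<otimes> (dd [^] u \<otimes> q)" if "q \<in> carrier G" for q
    using ctx[OF centralD[OF dd_cen b]] that b by (simp add: m_assoc)
  have e2: "ee [^] t \<otimes> (dd [^] u \<otimes> q) = dd [^] u \<otimes> (ee [^] t \<otimes> q)" if "q \<in> carrier G" for q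
    using ctx[OF centralD[OF ee_cen, of "dd [^] u"]] that by (simp add: m_assoc)
  have e3: "ee [^] t \<otimes> ee [^] v = ee [^] (v + t)"
    by (simp add: int_pow_mult add.commute del: pow_nat)
  have b1: "b [^] s \<otimes> (b \<otimes> q) = b [^] (s + 1) \<otimes> q" if "q \<in> carrier G" for q
    using ctx[of "b [^] s" b "b [^] (s + 1)" q] that b by (simp add: int_pow_mult del: pow_nat)
  have c1: "cc [^] t \<otimes> (b \<otimes> q) = b \<otimes> (cc [^] t \<otimes> (ee [^] t \<otimes> q))" if "q \<in> carrier G" for q
    using ctx[OF sw1] that b by (simp add: m_assoc)
  show ?thesis unfolding W_def using a b
    by (simp add: m_assoc e1 d1 c1 b1 e2 e3 del: pow_nat)
qed


lemma W_mult_a: "W r s t u v \<otimes> a = W (r + 1) s (t - s) (u + t) (v - tri s)"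
proof -
  have swc: "cc [^] t \<otimes> a = a \<otimes> (cc [^] t \<otimes> dd [^] t)"
    using pow_swap[OF cc_c a, of t] a dd_cen[of 1] by (simp add: dd_def m_assoc)
  have cab: "comm G (b [^] s) a = ee [^] (- tri s) \<otimes> cc [^] (- s)"
    using comm_inv_swap[of a "b [^] s"] comm_pow_right[OF a b, of s] a b
    by (simp add: cc_def[symmetric] ee_def[symmetric] inv_mult_group int_pow_neg del: pow_nat)
  have swb: "b [^] s \<otimes> a = a \<otimes> (b [^] s \<otimes> (ee [^] (- tri s) \<otimes> cc [^] (- s)))"
    using comm_eq[of "b [^] s" a] a b by (simp add: cab m_assoc del: pow_nat)
  have e1: "ee [^] v \<otimes> a = a \<otimes> ee [^] v" using centralD[OF ee_cen a] .
  have d1: "dd [^] u \<otimes> (a \<otimes> q) = a \<otimes> (dd [^] u \<otimes> q)" if "q \<in> carrier G" for q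
    using ctx[OF centralD[OF dd_cen a]] that a by (simp add: m_assoc)
  have c1: "cc [^] t \<otimes> (a \<otimes> q) = a \<otimes> (cc [^] t \<otimes> (dd [^] t \<otimes> q))" if "q \<in> carrier G" for q
    using ctx[OF swc] that a by (simp add: m_assoc)
  have b1: "b [^] s \<otimes> (a \<otimes> q) = a \<otimes> (b [^] s \<otimes> (ee [^] (- tri s) \<otimes> (cc [^] (- s) \<otimes> q)))"
    if "q \<in> carrier G" for q
    using ctx[OF swb] that a b by (simp add: m_assoc del: pow_nat)
  have a1: "a [^] r \<otimes> (a \<otimes> q) = a [^] (r + 1) \<otimes> q" if "q \<in> carrier G" for q
    using ctx[of "a [^] r" a "a [^] (r + 1)" q] that a by (simp add: int_pow_mult del: pow_nat)
  have x1: "ee [^] (- tri s) \<otimes> (cc [^] (- s) \<otimes> q) = cc [^] (- s) \<otimes> (ee [^] (- tri s) \<otimes> q)"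
    if "q \<in> carrier G" for q
    using ctx[OF centralD[OF ee_cen, of "cc [^] (- s)"]] that by (simp add: m_assoc del: pow_nat)
  have x2: "ee [^] (- tri s) \<otimes> (cc [^] t \<otimes> q) = cc [^] t \<otimes> (ee [^] (- tri s) \<otimes> q)"
    if "q \<in> carrier G" for q
    using ctx[OF centralD[OF ee_cen, of "cc [^] t"]] that by (simp add: m_assoc del: pow_nat)
  have x3: "ee [^] (- tri s) \<otimes> (dd [^] t \<otimes> q) = dd [^] t \<otimes> (ee [^] (- tri s) \<otimes> q)"
    if "q \<in> carrier G" for q
    using ctx[OF centralD[OF ee_cen, of "dd [^] t"]] that by (simp add: m_assoc del: pow_nat)
  have x4: "ee [^] (- tri s) \<otimes> (dd [^] u \<otimes> q) = dd [^] u \<otimes> (ee [^] (- tri s) \<otimes> q)"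
    if "q \<in> carrier G" for q
    using ctx[OF centralD[OF ee_cen, of "dd [^] u"]] that by (simp add: m_assoc del: pow_nat)
  have x5: "cc [^] (- s) \<otimes> (cc [^] t \<otimes> q) = cc [^] (t - s) \<otimes> q" if "q \<in> carrier G" for q
    using ctx[of "cc [^] (- s)" "cc [^] t" "cc [^] (t - s)" q] that
    by (simp add: int_pow_mult[symmetric] del: pow_nat)
  have x6: "dd [^] t \<otimes> (dd [^] u \<otimes> q) = dd [^] (u + t) \<otimes> q" if "q \<in> carrier G" for q
    using ctx[of "dd [^] t" "dd [^] u" "dd [^] (u + t)" q] that
    by (simp add: int_pow_mult[symmetric] add.commute del: pow_nat)
  have x8: "ee [^] (- tri s) \<otimes> (cc [^] (t - s) \<otimes> q) = cc [^] (t - s) \<otimes> (ee [^] (- tri s) \<otimes> q)"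
    if "q \<in> carrier G" for q
    using ctx[OF centralD[OF ee_cen, of "cc [^] (t - s)"]] that by (simp add: m_assoc del: pow_nat)
  have x9: "ee [^] (- tri s) \<otimes> (dd [^] (u + t) \<otimes> q) = dd [^] (u + t) \<otimes> (ee [^] (- tri s) \<otimes> q)"
    if "q \<in> carrier G" for q
    using ctx[OF centralD[OF ee_cen, of "dd [^] (u + t)"]] that by (simp add: m_assoc del: pow_nat)
  have x7: "ee [^] (- tri s) \<otimes> ee [^] v = ee [^] (v - tri s)"
    by (simp add: int_pow_mult[symmetric] del: pow_nat)
  show ?thesis unfolding W_def using a b
    by (simp add: m_assoc e1 d1 c1 b1 a1 x1 x2 x3 x4 x5 x6 x7 x8 x9 del: pow_nat)
qed


end

context c3ab begin
lemma W_0: "W 0 0 0 0 0 = \<one>"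
  by (simp add: W_def a b)

lemma inv_as_pow:
  assumes x: "x \<in> carrier G" and m: "x [^] (m::nat) = \<one>" "m > 0"
  shows "inv x = x [^] (m - 1)"
proof (rule inv_equality)
  have "x [^] (m - 1) \<otimes> x = x [^] (Suc (m - 1))" using x by simp
  also have "Suc (m - 1) = m" using m by simp
  finally show "x [^] (m - 1) \<otimes> x = \<one>" using m by simp
qed (use x in auto)

lemma W_collect:
  assumes am: "a [^] (m::nat) = \<one>" "m > 0" and bn: "b [^] (n::nat) = \<one>" "n > 0"
    and gen: "generate G {a, b} = carrier G"
    and g: "g \<in> carrier G"
  shows "\<exists>r s t u v. g = W r s t u v"
proof -
  define S where "S = {x. \<exists>r s t u v. x = W r s t u v}"
  have Sa: "x \<otimes> a \<in> S" if xS: "x \<in> S" for x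
  proof -
    obtain r s t u v where "x = W r s t u v" using xS unfolding S_def by blast
    then have "x \<otimes> a = W (r + 1) s (t - s) (u + t) (v - tri s)" using W_mult_a by simp
    then show ?thesis unfolding S_def by blast
  qed
  have Sb: "x \<otimes> b \<in> S" if xS: "x \<in> S" for x
  proof -
    obtain r s t u v where "x = W r s t u v" using xS unfolding S_def by blast
    then have "x \<otimes> b = W r (s + 1) t u (v + t)" using W_mult_b by simp
    then show ?thesis unfolding S_def by blast
  qed
  have Sc: "x \<in> carrier G" if xS: "x \<in> S" for x
  proof -
    obtain r s t u v where "x = W r s t u v" using xS unfolding S_def by blast
    then show ?thesis by simp
  qed
  have Sapow: "x \<otimes> a [^] (k::nat) \<in> S" if "x \<in> S" for x k
  proof (induct k)
    case 0 then show ?case using that Sc by simp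
  next
    case (Suc k)
    have "x \<otimes> a [^] Suc k = (x \<otimes> a [^] k) \<otimes> a" using a Sc[OF that] by (simp add: m_assoc)
    then show ?case using Sa Suc by simp
  qed
  have Sbpow: "x \<otimes> b [^] (k::nat) \<in> S" if "x \<in> S" for x k
  proof (induct k)
    case 0 then show ?case using that Sc by simp
  next
    case (Suc k)
    have "x \<otimes> b [^] Suc k = (x \<otimes> b [^] k) \<otimes> b" using b Sc[OF that] by (simp add: m_assoc)
    then show ?case using Sb Suc by simp
  qed
  have "\<forall>x\<in>S. x \<otimes> h \<in> S" if "h \<in> generate G {a, b}" for h
    using that
  proof (induct h rule: generate.induct)
    case one then show ?case using Sc by simp
  next
    case (incl h) then show ?case using Sa Sb by auto
  next
    case (inv h)
    then have "h = a \<or> h = b" by simp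
    then show ?case
    proof
      assume "h = a" then show ?thesis using Sapow inv_as_pow[OF a am] by simp
    next
      assume "h = b" then show ?thesis using Sbpow inv_as_pow[OF b bn] by simp
    qed
  next
    case (eng h1 h2)
    have "h1 \<in> carrier G" "h2 \<in> carrier G" using eng(1,3) gen by auto
    show ?case
    proof
      fix x assume x: "x \<in> S"
      have "x \<otimes> (h1 \<otimes> h2) = (x \<otimes> h1) \<otimes> h2" using x Sc \<open>h1 \<in> carrier G\<close> \<open>h2 \<in> carrier G\<close> by (simp add: m_assoc)
      then show "x \<otimes> (h1 \<otimes> h2) \<in> S" using eng(2,4) x by simp
    qed
  qed
  moreover have "\<one> \<in> S" unfolding S_def using W_0[symmetric] by blast
  ultimately have "\<one> \<otimes> g \<in> S" using g gen by blast
  then show ?thesis using g unfolding S_def by simp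
qed

end


type_synonym q5 = "int \<times> int \<times> int \<times> int \<times> int"

fun law :: "q5 \<Rightarrow> q5 \<Rightarrow> q5" where
  "law (r, s, t, u, v) (r2, s2, t2, u2, v2) =
     (r + r2, s + s2, t + t2 - r2 * s, u + u2 + t * r2 - s * tri r2,
      v + v2 + (t - r2 * s) * s2 - r2 * tri s)"

fun ilaw :: "q5 \<Rightarrow> q5" where
  "ilaw (r, s, t, u, v) = (- r, - s, - t - r * s, - u + t * r + r * r * s - s * tri r, - v + t * s + r * tri (- s))"

fun red :: "int \<Rightarrow> int \<Rightarrow> int \<Rightarrow> q5 \<Rightarrow> q5" where
  "red A B g (r, s, t, u, v) = (r mod A, s mod B, t mod B, u mod g, v mod g)"

declare red.simps[simp del]

lemma law_assoc: "law (law x y) z = law x (law y z)"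
  apply (cases x; cases y; cases z)
  apply (simp add: tri_add algebra_simps)
  done

lemma law_0: "law (0, 0, 0, 0, 0) x = x"
  by (cases x) simp

lemma law_inv: "law (ilaw x) x = (0, 0, 0, 0, 0)"
  by (cases x) (simp add: tri_add tri_neg algebra_simps)

lemma tri_cong:
  fixes g :: int
  assumes "x mod (2 * g) = y mod (2 * g)"
  shows "tri x mod g = tri y mod g"
proof -
  obtain k where k: "x - y = 2 * g * k" using assms mod_eq_dvd_iff by blast
  have x: "x = y + 2 * g * k" using k by simp
  have "2 * tri (2 * g * k) = 2 * (g * k * (2 * g * k - 1))" unfolding tri2 by (simp add: algebra_simps)
  then have t: "tri (2 * g * k) = g * k * (2 * g * k - 1)" by simp
  have "tri x - tri y = g * (k * (2 * g * k - 1) + 2 * y * k)"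
    unfolding x tri_add t by (simp add: algebra_simps)
  then show ?thesis by (simp add: mod_eq_dvd_iff)
qed

lemma mod_weaken:
  fixes A B :: int
  assumes "x mod A = y mod A" "B dvd A"
  shows "x mod B = y mod B"
  using assms by (auto simp: mod_eq_dvd_iff intro: dvd_trans)

lemma law_cong:
  fixes A B g :: int
  assumes BA: "B dvd A" and gB: "2 * g dvd B"
    and xx: "red A B g x = red A B g x'" and Y: "red A B g y = red A B g y'"
  shows "red A B g (law x y) = red A B g (law x' y')"
proof -
  obtain r1 s1 t1 u1 v1 where x: "x = (r1, s1, t1, u1, v1)" by (cases x) auto
  obtain r2 s2 t2 u2 v2 where y: "y = (r2, s2, t2, u2, v2)" by (cases y) auto
  obtain r1' s1' t1' u1' v1' where x': "x' = (r1', s1', t1', u1', v1')" by (cases x') auto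
  obtain r2' s2' t2' u2' v2' where y': "y' = (r2', s2', t2', u2', v2')" by (cases y') auto
  have gA: "2 * g dvd A" using gB BA by (rule dvd_trans)
  have g1: "g dvd 2 * g" by simp
  have gB': "g dvd B" using g1 gB by (rule dvd_trans)
  note c = xx[unfolded x x' red.simps, simplified] Y[unfolded y y' red.simps, simplified]
  have r2B: "r2 mod B = r2' mod B" using c mod_weaken BA by blast
  have r2g: "r2 mod g = r2' mod g" using c mod_weaken gA g1 by blast
  have s1g: "s1 mod g = s1' mod g" using c mod_weaken gB' by blast
  have s2g: "s2 mod g = s2' mod g" using c mod_weaken gB' by blast
  have t1g: "t1 mod g = t1' mod g" using c mod_weaken gB' by blast
  have tr2: "tri r2 mod g = tri r2' mod g" using c mod_weaken gA tri_cong by blast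
  have ts1: "tri s1 mod g = tri s1' mod g" using c mod_weaken gB tri_cong by blast
  show ?thesis unfolding x y x' y' law.simps red.simps prod.inject
    using c r2B r2g s1g s2g t1g tr2 ts1
    by (intro conjI mod_add_cong mod_diff_cong mod_mult_cong) auto
qed


lemma law_fst: "fst (law p q) = fst p + fst q" by (cases p; cases q) simp
lemma law_fst2: "fst (snd (law p q)) = fst (snd p) + fst (snd q)" by (cases p; cases q) simp
lemma ilaw_fst: "fst (ilaw p) = - fst p" by (cases p) simp
lemma ilaw_fst2: "fst (snd (ilaw p)) = - fst (snd p)" by (cases p) simp

lemma law_0r: "law x (0, 0, 0, 0, 0) = x" by (cases x) simp

lemma law_central3: "law (0, 0, 0, u, v) y = law y (0, 0, 0, u, v)"
  by (cases y) simp

lemma law_central2: "law (0, 0, t, u, v) y = law (law y (0, 0, t, u, v)) (0, 0, 0, t * fst y, t * fst (snd y))"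
  by (cases y) (simp add: algebra_simps)


locale hm =
  fixes A B g :: int
  assumes BA: "B dvd A" and gB: "2 * g dvd B" and g0: "g > 0" and A0: "A > 0"
begin

abbreviation "rd \<equiv> red A B g"


lemma rd_rd[simp]: "rd (rd x) = rd x"
  by (cases x) (simp add: red.simps)

lemma rd_law_l[simp]: "rd (law (rd x) y) = rd (law x y)"
  by (rule law_cong[OF BA gB]) simp_all

lemma rd_law_r[simp]: "rd (law x (rd y)) = rd (law x y)"
  by (rule law_cong[OF BA gB]) simp_all

lemma rd_0: "rd (0, 0, 0, 0, 0) = (0, 0, 0, 0, 0)" by (simp add: red.simps)

definition Hn :: "nat monoid" where
  "Hn = \<lparr>carrier = to_nat ` range rd,
         monoid.mult = \<lambda>x y. to_nat (rd (law (from_nat x) (from_nat y))),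
         monoid.one = to_nat ((0, 0, 0, 0, 0) :: q5)\<rparr>"

lemma Hn_carrier: "carrier Hn = to_nat ` range rd" by (simp add: Hn_def)

lemma Hn_mem[simp]: "to_nat (rd x) \<in> carrier Hn" by (simp add: Hn_def)

lemma Hn_mult[simp]: "to_nat (rd x) \<otimes>\<^bsub>Hn\<^esub> to_nat (rd y) = to_nat (rd (law x y))"
  by (simp add: Hn_def)

lemma Hn_one: "\<one>\<^bsub>Hn\<^esub> = to_nat (rd (0, 0, 0, 0, 0))" by (simp add: Hn_def rd_0)

lemma Hn_cases: "z \<in> carrier Hn \<Longrightarrow> (\<And>x. z = to_nat (rd x) \<Longrightarrow> P) \<Longrightarrow> P"
  by (auto simp: Hn_def)

lemma group_Hn: "group Hn"
proof (rule groupI)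
  fix x y assume "x \<in> carrier Hn" "y \<in> carrier Hn"
  then show "x \<otimes>\<^bsub>Hn\<^esub> y \<in> carrier Hn"
    by (elim Hn_cases) simp
next
  show "\<one>\<^bsub>Hn\<^esub> \<in> carrier Hn" unfolding Hn_one by simp
next
  fix x y z assume "x \<in> carrier Hn" "y \<in> carrier Hn" "z \<in> carrier Hn"
  then obtain x' y' z' where "x = to_nat (rd x')" "y = to_nat (rd y')" "z = to_nat (rd z')"
    by (metis Hn_cases)
  then show "x \<otimes>\<^bsub>Hn\<^esub> y \<otimes>\<^bsub>Hn\<^esub> z = x \<otimes>\<^bsub>Hn\<^esub> (y \<otimes>\<^bsub>Hn\<^esub> z)"
    by (simp only: Hn_mult rd_law_l rd_law_r law_assoc)
next
  fix x assume "x \<in> carrier Hn"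
  then obtain x' where "x = to_nat (rd x')" by (metis Hn_cases)
  then show "\<one>\<^bsub>Hn\<^esub> \<otimes>\<^bsub>Hn\<^esub> x = x"
    by (simp only: Hn_one Hn_mult rd_law_l rd_law_r law_0)
next
  fix x assume "x \<in> carrier Hn"
  then obtain x' where x: "x = to_nat (rd x')" by (metis Hn_cases)
  have "to_nat (rd (ilaw x')) \<otimes>\<^bsub>Hn\<^esub> x = \<one>\<^bsub>Hn\<^esub>"
    unfolding x by (simp only: Hn_one Hn_mult law_inv)
  then show "\<exists>y\<in>carrier Hn. y \<otimes>\<^bsub>Hn\<^esub> x = \<one>\<^bsub>Hn\<^esub>" using Hn_mem by blast
qed

lemma Hn_inv[simp]: "inv\<^bsub>Hn\<^esub> (to_nat (rd x)) = to_nat (rd (ilaw x))"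
  by (rule group.inv_equality[OF group_Hn]) (simp_all add: law_inv Hn_one)

lemma Hn_comm: "comm Hn (to_nat (rd x)) (to_nat (rd y)) = to_nat (rd (law (law (law (ilaw x) (ilaw y)) x) y))"
  by (simp add: comm_def)

lemma Hn_pow:
  fixes f :: "int \<Rightarrow> q5"
  assumes hom: "\<And>m n. law (f m) (f n) = f (m + n)" and f0: "f 0 = (0, 0, 0, 0, 0)"
  shows "to_nat (rd (f 1)) [^]\<^bsub>Hn\<^esub> (n::int) = to_nat (rd (f n))"
proof -
  have nat: "to_nat (rd (f 1)) [^]\<^bsub>Hn\<^esub> (k::nat) = to_nat (rd (f (int k)))" for k
  proof (induct k)
    case 0 then show ?case by (simp only: f0 Hn_one nat_pow_0 of_nat_0)
  next
    case (Suc k)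
    have "to_nat (rd (f 1)) [^]\<^bsub>Hn\<^esub> (Suc k) = to_nat (rd (f 1)) [^]\<^bsub>Hn\<^esub> k \<otimes>\<^bsub>Hn\<^esub> to_nat (rd (f 1))"
      by (simp only: nat_pow_Suc)
    also have "\<dots> = to_nat (rd (f (int k + 1)))" by (simp only: Suc Hn_mult hom)
    finally show ?case by (simp add: add.commute)
  qed
  show ?thesis
  proof (cases "n < 0")
    case True
    have "inv\<^bsub>Hn\<^esub> (to_nat (rd (f (- n)))) = to_nat (rd (f n))"
    proof (rule group.inv_equality[OF group_Hn])
      show "to_nat (rd (f n)) \<otimes>\<^bsub>Hn\<^esub> to_nat (rd (f (- n))) = \<one>\<^bsub>Hn\<^esub>"
        by (simp only: Hn_mult hom Hn_one f0 add.right_inverse)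
    qed simp_all
    then show ?thesis using True nat[of "nat (- n)"] by (simp add: int_pow_def2 del: pow_nat)
  next
    case False
    then show ?thesis using nat[of "nat n"] by (simp add: int_pow_def2 del: pow_nat)
  qed
qed



lemma law_inv_ctx: "law (ilaw x) (law x q) = q"
  by (simp only: law_assoc[symmetric] law_inv law_0)

definition "Z2 = {to_nat (rd (0, 0, t, u, v)) | t u v. True}"
definition "Z3 = {to_nat (rd (0, 0, 0, u, v)) | u v. True}"

lemma subgroup_Z2: "subgroup Z2 Hn"
proof (rule group.subgroupI[OF group_Hn])
  show "Z2 \<subseteq> carrier Hn" unfolding Z2_def by auto
  show "Z2 \<noteq> {}" unfolding Z2_def by auto
next
  fix x assume "x \<in> Z2"
  then obtain t u v where x: "x = to_nat (rd (0, 0, t, u, v))" unfolding Z2_def by auto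
  have "inv\<^bsub>Hn\<^esub> x = to_nat (rd (0, 0, - t, - u, - v))" unfolding x Hn_inv by simp
  then show "inv\<^bsub>Hn\<^esub> x \<in> Z2" unfolding Z2_def by blast
next
  fix x y assume "x \<in> Z2" "y \<in> Z2"
  then obtain t u v t' u' v' where x: "x = to_nat (rd (0, 0, t, u, v))" and y: "y = to_nat (rd (0, 0, t', u', v'))"
    unfolding Z2_def by auto
  have "x \<otimes>\<^bsub>Hn\<^esub> y = to_nat (rd (0, 0, t + t', u + u', v + v'))" unfolding x y Hn_mult by simp
  then show "x \<otimes>\<^bsub>Hn\<^esub> y \<in> Z2" unfolding Z2_def by blast
qed

lemma subgroup_Z3: "subgroup Z3 Hn"
proof (rule group.subgroupI[OF group_Hn])
  show "Z3 \<subseteq> carrier Hn" unfolding Z3_def by auto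
  show "Z3 \<noteq> {}" unfolding Z3_def by auto
next
  fix x assume "x \<in> Z3"
  then obtain u v where x: "x = to_nat (rd (0, 0, 0, u, v))" unfolding Z3_def by auto
  have "inv\<^bsub>Hn\<^esub> x = to_nat (rd (0, 0, 0, - u, - v))" unfolding x Hn_inv by simp
  then show "inv\<^bsub>Hn\<^esub> x \<in> Z3" unfolding Z3_def by blast
next
  fix x y assume "x \<in> Z3" "y \<in> Z3"
  then obtain u v u' v' where x: "x = to_nat (rd (0, 0, 0, u, v))" and y: "y = to_nat (rd (0, 0, 0, u', v'))"
    unfolding Z3_def by auto
  have "x \<otimes>\<^bsub>Hn\<^esub> y = to_nat (rd (0, 0, 0, u + u', v + v'))" unfolding x y Hn_mult by simp
  then show "x \<otimes>\<^bsub>Hn\<^esub> y \<in> Z3" unfolding Z3_def by blast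
qed

lemma comm_Z2: "x \<in> carrier Hn \<Longrightarrow> y \<in> carrier Hn \<Longrightarrow> comm Hn x y \<in> Z2"
proof -
  assume "x \<in> carrier Hn" "y \<in> carrier Hn"
  then obtain x' y' where x: "x = to_nat (rd x')" and y: "y = to_nat (rd y')" by (metis Hn_cases)
  define P where "P = law (law (law (ilaw x') (ilaw y')) x') y'"
  have "fst P = 0" "fst (snd P) = 0" unfolding P_def by (simp_all add: law_fst law_fst2 ilaw_fst ilaw_fst2)
  then obtain t u v where "P = (0, 0, t, u, v)" by (cases P) auto
  then show ?thesis unfolding x y Hn_comm P_def[symmetric] Z2_def by blast
qed

lemma comm_Z3: "z \<in> Z2 \<Longrightarrow> y \<in> carrier Hn \<Longrightarrow> comm Hn z y \<in> Z3"
proof -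
  assume "z \<in> Z2" "y \<in> carrier Hn"
  then obtain t u v y' where z: "z = to_nat (rd (0, 0, t, u, v))" and y: "y = to_nat (rd y')"
    unfolding Z2_def by (auto elim: Hn_cases)
  define e where "e = ((0::int), (0::int), (0::int), t * fst y', t * fst (snd y'))"
  have eq: "law (law (law (ilaw (0, 0, t, u, v)) (ilaw y')) (0, 0, t, u, v)) y' = e"
    by (simp only: law_assoc law_central2[of t u v y'] e_def[symmetric] law_inv_ctx)
  show ?thesis unfolding z y Hn_comm eq Z3_def e_def by blast
qed

lemma comm_one: "z \<in> Z3 \<Longrightarrow> y \<in> carrier Hn \<Longrightarrow> comm Hn z y = \<one>\<^bsub>Hn\<^esub>"
proof -
  assume "z \<in> Z3" "y \<in> carrier Hn"
  then obtain u v y' where z: "z = to_nat (rd (0, 0, 0, u, v))" and y: "y = to_nat (rd y')"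
    unfolding Z3_def by (auto elim: Hn_cases)
  have eq: "law (law (law (ilaw (0, 0, 0, u, v)) (ilaw y')) (0, 0, 0, u, v)) y' = (0, 0, 0, 0, 0)"
    by (simp only: law_assoc law_central3[of u v y'] law_inv_ctx law_inv)
  show ?thesis unfolding z y Hn_comm Hn_one eq ..
qed

lemma nilp_Hn: "nilpotent_class_le Hn 3"
proof -
  interpret H: group Hn by (rule group_Hn)
  have l2: "lcs Hn (Suc (Suc 0)) \<subseteq> Z2"
    by (simp only: lcs.simps, rule H.generate_subgroup_incl[OF _ subgroup_Z2]) (auto intro: comm_Z2)
  have l3: "lcs Hn (Suc (Suc (Suc 0))) \<subseteq> Z3"
    apply (simp only: lcs.simps(3)[of Hn "Suc 0"])
    apply (rule H.generate_subgroup_incl[OF _ subgroup_Z3])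
    using l2 comm_Z3 by auto
  have l4: "lcs Hn (Suc (Suc (Suc (Suc 0)))) \<subseteq> {\<one>\<^bsub>Hn\<^esub>}"
    apply (simp only: lcs.simps(3)[of Hn "Suc (Suc 0)"])
    apply (rule H.generate_subgroup_incl[OF _ H.triv_subgroup])
    using l3 comm_one by auto
  have "\<one>\<^bsub>Hn\<^esub> \<in> lcs Hn (Suc (Suc (Suc (Suc 0))))"
    by (simp only: lcs.simps(3)[of Hn "Suc (Suc 0)"]) (rule generate.one)
  then have "lcs Hn (Suc (Suc (Suc (Suc 0)))) = {\<one>\<^bsub>Hn\<^esub>}" using l4 by blast
  then show ?thesis unfolding nilpotent_class_le_def by (simp add: numeral_eq_Suc)
qed


lemma tri_m1[simp]: "tri (-1) = 1" by (simp add: tri_def)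

definition "xH = to_nat (rd (1, 0, 0, 0, 0))"
definition "yH = to_nat (rd (0, 1, 0, 0, 0))"

lemma xH_c[simp]: "xH \<in> carrier Hn" and yH_c[simp]: "yH \<in> carrier Hn"
  by (simp_all add: xH_def yH_def)

lemma comm_xy: "comm Hn xH yH = to_nat (rd (0, 0, 1, 0, 0))"
  unfolding xH_def yH_def Hn_comm by simp

lemma comm_xyx: "comm Hn (comm Hn xH yH) xH = to_nat (rd (0, 0, 0, 1, 0))"
  unfolding comm_xy unfolding xH_def Hn_comm by simp

lemma comm_xyy: "comm Hn (comm Hn xH yH) yH = to_nat (rd (0, 0, 0, 0, 1))"
  unfolding comm_xy unfolding yH_def Hn_comm by simp

lemma pow_1: "to_nat (rd (1, 0, 0, 0, 0)) [^]\<^bsub>Hn\<^esub> (n::int) = to_nat (rd (n, 0, 0, 0, 0))"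
  using Hn_pow[of "\<lambda>n. (n, 0, 0, 0, 0)" n] by simp
lemma pow_2: "to_nat (rd (0, 1, 0, 0, 0)) [^]\<^bsub>Hn\<^esub> (n::int) = to_nat (rd (0, n, 0, 0, 0))"
  using Hn_pow[of "\<lambda>n. (0, n, 0, 0, 0)" n] by simp
lemma pow_3: "to_nat (rd (0, 0, 1, 0, 0)) [^]\<^bsub>Hn\<^esub> (n::int) = to_nat (rd (0, 0, n, 0, 0))"
  using Hn_pow[of "\<lambda>n. (0, 0, n, 0, 0)" n] by simp
lemma pow_4: "to_nat (rd (0, 0, 0, 1, 0)) [^]\<^bsub>Hn\<^esub> (n::int) = to_nat (rd (0, 0, 0, n, 0))"
  using Hn_pow[of "\<lambda>n. (0, 0, 0, n, 0)" n] by simp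
lemma pow_5: "to_nat (rd (0, 0, 0, 0, 1)) [^]\<^bsub>Hn\<^esub> (n::int) = to_nat (rd (0, 0, 0, 0, n))"
  using Hn_pow[of "\<lambda>n. (0, 0, 0, 0, n)" n] by simp

lemma word_Hn:
  "xH [^]\<^bsub>Hn\<^esub> r \<otimes>\<^bsub>Hn\<^esub> yH [^]\<^bsub>Hn\<^esub> s \<otimes>\<^bsub>Hn\<^esub> comm Hn xH yH [^]\<^bsub>Hn\<^esub> t
    \<otimes>\<^bsub>Hn\<^esub> comm Hn (comm Hn xH yH) xH [^]\<^bsub>Hn\<^esub> u \<otimes>\<^bsub>Hn\<^esub> comm Hn (comm Hn xH yH) yH [^]\<^bsub>Hn\<^esub> (v::int)
   = to_nat (rd (r, s, t, u, v))"
  unfolding comm_xyx comm_xyy unfolding comm_xy unfolding xH_def yH_def pow_1 pow_2 pow_3 pow_4 pow_5 Hn_mult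
  by simp

lemma xH_pow: "int m = A \<Longrightarrow> xH [^]\<^bsub>Hn\<^esub> (m::nat) = \<one>\<^bsub>Hn\<^esub>"
proof -
  assume m: "int m = A"
  have "xH [^]\<^bsub>Hn\<^esub> m = xH [^]\<^bsub>Hn\<^esub> (int m)" by (simp add: int_pow_int)
  also have "\<dots> = to_nat (rd (A, 0, 0, 0, 0))" unfolding xH_def pow_1 m ..
  also have "rd (A, 0, 0, 0, 0) = rd (0, 0, 0, 0, 0)" by (simp add: red.simps)
  finally show ?thesis by (simp add: Hn_one)
qed

lemma yH_pow: "int m = B \<Longrightarrow> yH [^]\<^bsub>Hn\<^esub> (m::nat) = \<one>\<^bsub>Hn\<^esub>"
proof -
  assume m: "int m = B"
  have "yH [^]\<^bsub>Hn\<^esub> m = yH [^]\<^bsub>Hn\<^esub> (int m)" by (simp add: int_pow_int)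
  also have "\<dots> = to_nat (rd (0, B, 0, 0, 0))" unfolding yH_def pow_2 m ..
  also have "rd (0, B, 0, 0, 0) = rd (0, 0, 0, 0, 0)" by (simp add: red.simps)
  finally show ?thesis by (simp add: Hn_one)
qed

lemma dH_pow: "comm Hn (comm Hn xH yH) xH [^]\<^bsub>Hn\<^esub> (g::int) = \<one>\<^bsub>Hn\<^esub>"
  unfolding comm_xyx pow_4 Hn_one by (simp add: red.simps)

lemma eH_pow: "comm Hn (comm Hn xH yH) yH [^]\<^bsub>Hn\<^esub> (g::int) = \<one>\<^bsub>Hn\<^esub>"
  unfolding comm_xyy pow_5 Hn_one by (simp add: red.simps)

lemma rd_inj: "to_nat (rd (r, s, t, u, v)) = to_nat (rd (r', s', t', u', v')) \<Longrightarrow>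
  r mod A = r' mod A \<and> s mod B = s' mod B \<and> t mod B = t' mod B \<and> u mod g = u' mod g \<and> v mod g = v' mod g"
  by (simp add: red.simps)


end


lemma hom_comm:
  assumes "group_hom G H h" "x \<in> carrier G" "y \<in> carrier G"
  shows "h (comm G x y) = comm H (h x) (h y)"
proof -
  interpret group_hom G H h by (rule assms(1))
  show ?thesis using assms(2,3) by (simp add: comm_def)
qed

context group begin

lemma pow_mod_eq:
  assumes x: "x \<in> carrier G" and m: "x [^] (m::nat) = \<one>" and rr: "r mod int m = r' mod int m"
  shows "x [^] (r::int) = x [^] r'"
proof -
  have z: "x [^] (int m * k) = \<one>" for k
    using x m by (simp add: int_pow_pow[symmetric] int_pow_int del: pow_nat)
  have "x [^] r = x [^] (r mod int m + int m * (r div int m))" by simp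
  also have "\<dots> = x [^] (r mod int m) \<otimes> x [^] (int m * (r div int m))" by (rule int_pow_mult[OF x])
  also have "\<dots> = x [^] (r' mod int m) \<otimes> x [^] (int m * (r' div int m))" using x z rr by simp
  also have "\<dots> = x [^] (r' mod int m + int m * (r' div int m))" by (rule int_pow_mult[OF x, symmetric])
  also have "\<dots> = x [^] r'" by simp
  finally show ?thesis .
qed

lemma generate_central:
  assumes "\<forall>k\<in>S. central k" and "h \<in> generate G S"
  shows "central h"
  using assms(2)
proof (induct h rule: generate.induct)
  case one then show ?case by (rule central_one)
next
  case (incl h) then show ?case using assms(1) by blast
next
  case (inv h) then show ?case using assms(1) central_inv by blast
next
  case (eng h1 h2) then show ?case using central_mult by blast
qed

lemma normal_central:
  assumes S: "S \<subseteq> carrier G" and c: "\<forall>k\<in>S. central k"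
  shows "generate G S \<lhd> G"
proof -
  have "x \<otimes> h \<otimes> inv x \<in> generate G S" if "x \<in> carrier G" "h \<in> generate G S" for x h
  proof -
    have ch: "central h" using generate_central[OF c that(2)] .
    have hc: "h \<in> carrier G" using central_carrier[OF ch] .
    have "x \<otimes> h \<otimes> inv x = h \<otimes> x \<otimes> inv x" using centralD[OF ch that(1)] by simp
    also have "\<dots> = h" using hc that(1) by (simp add: m_assoc)
    finally have "x \<otimes> h \<otimes> inv x = h" .
    then show ?thesis using that(2) by simp
  qed
  then show ?thesis using generate_is_subgroup[OF S] by (simp add: normal_inv_iff)
qed

end

lemma c3_of_nilp:
  fixes G (structure)
  assumes G: "group G" and nil: "nilpotent_class_le G 3"
  shows "c3 G"
proof -
  interpret group G by (rule G)
  have l4: "lcs G (Suc (Suc (Suc (Suc 0)))) = {\<one>}" using nil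
    unfolding nilpotent_class_le_def by (simp add: numeral_eq_Suc)
  show ?thesis
  proof (unfold_locales)
    fix x y z assume xyz: "x \<in> carrier G" "y \<in> carrier G" "z \<in> carrier G"
    have "comm G x y \<in> lcs G (Suc (Suc 0))" using xyz by (auto intro: generate.incl)
    then have k3: "comm G (comm G x y) z \<in> lcs G (Suc (Suc (Suc 0)))"
      using xyz by (simp only: lcs.simps(3)[of G "Suc 0"]) (auto intro: generate.incl)
    define k where "k = comm G (comm G x y) z"
    have kc: "k \<in> carrier G" using xyz by (simp add: k_def)
    have "k \<otimes> g = g \<otimes> k" if g: "g \<in> carrier G" for g
    proof -
      have "comm G k g \<in> lcs G (Suc (Suc (Suc (Suc 0))))"
        using k3 g unfolding k_def[symmetric] by (simp only: lcs.simps(3)[of G "Suc (Suc 0)"]) (auto intro: generate.incl)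
      then have "comm G k g = \<one>" using l4 by simp
      then show ?thesis using comm_eq[OF kc g] kc g by simp
    qed
    then show "group.central G (comm G (comm G x y) z)" using kc unfolding k_def central_def by blast
  qed
qed

theorem theorem5p4:
  fixes G :: "('g, 'z) monoid_scheme" and a b :: 'g and \<alpha> \<beta> \<gamma> :: nat
  assumes "\<alpha> \<ge> \<beta>" and "\<beta> \<ge> 1"
    and "1 \<le> \<gamma>" and "\<gamma> < \<beta>"
    and "is_3nilpotent_product G a b (2 ^ \<alpha>) (2 ^ \<beta>)"
  defines "N \<equiv> generate G
             {comm G (comm G a b) a [^]\<^bsub>G\<^esub> ((2::nat) ^ \<gamma>),
              comm G (comm G a b) b [^]\<^bsub>G\<^esub> ((2::nat) ^ \<gamma>)}"
  defines "K \<equiv> G Mod N"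
  defines "w \<equiv> \<lambda>(r::int) (s::int) (t::int) (u::int) (v::int).
             (N #>\<^bsub>G\<^esub> a) [^]\<^bsub>K\<^esub> r \<otimes>\<^bsub>K\<^esub>
             (N #>\<^bsub>G\<^esub> b) [^]\<^bsub>K\<^esub> s \<otimes>\<^bsub>K\<^esub>
             comm K (N #>\<^bsub>G\<^esub> a) (N #>\<^bsub>G\<^esub> b) [^]\<^bsub>K\<^esub> t \<otimes>\<^bsub>K\<^esub>
             comm K (comm K (N #>\<^bsub>G\<^esub> a) (N #>\<^bsub>G\<^esub> b)) (N #>\<^bsub>G\<^esub> a) [^]\<^bsub>K\<^esub> u \<otimes>\<^bsub>K\<^esub>
             comm K (comm K (N #>\<^bsub>G\<^esub> a) (N #>\<^bsub>G\<^esub> b)) (N #>\<^bsub>G\<^esub> b) [^]\<^bsub>K\<^esub> v"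
  shows "(\<forall>k \<in> carrier K. \<exists>r s t u v. k = w r s t u v) \<and>
         (\<forall>r s t u v r' s' t' u' v'.
            w r s t u v = w r' s' t' u' v' \<longleftrightarrow>
              r mod 2 ^ \<alpha> = r' mod 2 ^ \<alpha> \<and> s mod 2 ^ \<beta> = s' mod 2 ^ \<beta> \<and> t mod 2 ^ \<beta> = t' mod 2 ^ \<beta> \<and>
              u mod 2 ^ \<gamma> = u' mod 2 ^ \<gamma> \<and> v mod 2 ^ \<gamma> = v' mod 2 ^ \<gamma>)"
proof -
  define m :: nat where "m = 2 ^ \<alpha>"
  define n :: nat where "n = 2 ^ \<beta>"
  define q :: nat where "q = 2 ^ \<gamma>"
  note P = assms(5)[unfolded is_3nilpotent_product_def]
  have grp: "group G" and ac: "a \<in> carrier G" and bc: "b \<in> carrier G"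
    and am: "a [^]\<^bsub>G\<^esub> m = \<one>\<^bsub>G\<^esub>" and bn: "b [^]\<^bsub>G\<^esub> n = \<one>\<^bsub>G\<^esub>"
    and gen: "generate G {a, b} = carrier G" and nil: "nilpotent_class_le G 3"
    using P by (simp_all add: m_def n_def)
  have univ: "\<And>(H :: nat monoid) x y. group H \<Longrightarrow> nilpotent_class_le H 3 \<Longrightarrow> x \<in> carrier H \<Longrightarrow> y \<in> carrier H \<Longrightarrow>
        x [^]\<^bsub>H\<^esub> m = \<one>\<^bsub>H\<^esub> \<Longrightarrow> y [^]\<^bsub>H\<^esub> n = \<one>\<^bsub>H\<^esub> \<Longrightarrow>
        (\<exists>h \<in> hom G H. h a = x \<and> h b = y)"
    using P unfolding m_def n_def by blast
  have c3G: "c3 G" by (rule c3_of_nilp[OF grp nil])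
  interpret c3ab G a b using c3G ac bc by (simp add: c3ab_def c3ab_axioms_def)
  have Nd: "N = generate G {dd [^]\<^bsub>G\<^esub> q, ee [^]\<^bsub>G\<^esub> q}" by (simp add: N_def dd_def ee_def cc_def q_def)
  have Ncen: "\<forall>k\<in>{dd [^]\<^bsub>G\<^esub> q, ee [^]\<^bsub>G\<^esub> q}. central k"
    using dd_cen[of "int q"] ee_cen[of "int q"] by (simp add: int_pow_int)
  have Nn: "N \<lhd> G" unfolding Nd by (rule normal_central) (use Ncen in \<open>auto simp: central_def\<close>)
  interpret NN: normal N G by (rule Nn)
  have Nsub: "subgroup N G" by (rule NN.subgroup_axioms)
  have Kg: "group K" unfolding K_def by (rule NN.factorgroup_is_group)
  interpret pi: group_hom G K "\<lambda>x. N #>\<^bsub>G\<^esub> x"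
    unfolding group_hom_def group_hom_axioms_def K_def
    using NN.r_coset_hom_Mod NN.factorgroup_is_group is_group by blast
  have oneK: "\<one>\<^bsub>K\<^esub> = N" unfolding K_def by simp
  have piN: "N #>\<^bsub>G\<^esub> x = \<one>\<^bsub>K\<^esub>" if "x \<in> N" for x
    using subgroup.rcos_const[OF Nsub is_group that] oneK by simp
  have ddq: "dd [^]\<^bsub>G\<^esub> q \<in> N" unfolding Nd by (rule generate.incl) simp
  have eeq: "ee [^]\<^bsub>G\<^esub> q \<in> N" unfolding Nd by (rule generate.incl) simp
  have ccn: "cc [^]\<^bsub>G\<^esub> n \<in> N"
  proof -
    define k :: int where "k = 2 ^ (\<beta> - 1 - \<gamma>) * (2 ^ \<beta> - 1)"
    have nb: "int n = 2 * (int q * 2 ^ (\<beta> - 1 - \<gamma>))"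
    proof -
      have "\<beta> = Suc (\<gamma> + (\<beta> - 1 - \<gamma>))" using assms(4) by simp
      then have "(2::int) ^ \<beta> = 2 ^ Suc (\<gamma> + (\<beta> - 1 - \<gamma>))" by simp
      then show ?thesis unfolding n_def q_def by (simp add: power_add)
    qed
    have "2 * tri (int n) = 2 * (int q * k)"
      unfolding tri2 k_def using nb by (simp add: n_def algebra_simps)
    then have tn: "tri (int n) = int q * k" by simp
    have "comm G a (b [^]\<^bsub>G\<^esub> (int n)) = cc [^]\<^bsub>G\<^esub> (int n) \<otimes>\<^bsub>G\<^esub> ee [^]\<^bsub>G\<^esub> tri (int n)"
      unfolding cc_def ee_def by (rule comm_pow_right[OF ac bc])
    moreover have "b [^]\<^bsub>G\<^esub> (int n) = \<one>\<^bsub>G\<^esub>" using bn by (simp add: int_pow_int)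
    ultimately have "cc [^]\<^bsub>G\<^esub> (int n) \<otimes>\<^bsub>G\<^esub> ee [^]\<^bsub>G\<^esub> tri (int n) = \<one>\<^bsub>G\<^esub>"
      using ac by (simp add: comm_def)
    then have "inv\<^bsub>G\<^esub> (ee [^]\<^bsub>G\<^esub> tri (int n)) = cc [^]\<^bsub>G\<^esub> (int n)"
      by (intro inv_equality) simp_all
    moreover have "ee [^]\<^bsub>G\<^esub> tri (int n) = (ee [^]\<^bsub>G\<^esub> q) [^]\<^bsub>G\<^esub> k"
      unfolding tn by (simp add: int_pow_pow int_pow_int[symmetric] del: pow_nat)
    moreover have "(ee [^]\<^bsub>G\<^esub> q) [^]\<^bsub>G\<^esub> k \<in> N"
      by (rule subgroup_int_pow_closed[OF Nsub eeq])
    ultimately have "cc [^]\<^bsub>G\<^esub> (int n) \<in> N" using subgroup.m_inv_closed[OF Nsub] by metis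
    then show ?thesis by (simp add: int_pow_int)
  qed
  have piC: "N #>\<^bsub>G\<^esub> cc = comm K (N #>\<^bsub>G\<^esub> a) (N #>\<^bsub>G\<^esub> b)"
    unfolding cc_def using hom_comm[OF pi.group_hom_axioms ac bc] .
  have piD: "N #>\<^bsub>G\<^esub> dd = comm K (N #>\<^bsub>G\<^esub> cc) (N #>\<^bsub>G\<^esub> a)"
    unfolding dd_def using hom_comm[OF pi.group_hom_axioms cc_c ac] .
  have piE: "N #>\<^bsub>G\<^esub> ee = comm K (N #>\<^bsub>G\<^esub> cc) (N #>\<^bsub>G\<^esub> b)"
    unfolding ee_def using hom_comm[OF pi.group_hom_axioms cc_c bc] .
  have piW: "N #>\<^bsub>G\<^esub> W r s t u v = w r s t u v" for r s t u v
  proof -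
    have "N #>\<^bsub>G\<^esub> W r s t u v = (N #>\<^bsub>G\<^esub> a) [^]\<^bsub>K\<^esub> r \<otimes>\<^bsub>K\<^esub> (N #>\<^bsub>G\<^esub> b) [^]\<^bsub>K\<^esub> s
       \<otimes>\<^bsub>K\<^esub> (N #>\<^bsub>G\<^esub> cc) [^]\<^bsub>K\<^esub> t \<otimes>\<^bsub>K\<^esub> (N #>\<^bsub>G\<^esub> dd) [^]\<^bsub>K\<^esub> u \<otimes>\<^bsub>K\<^esub> (N #>\<^bsub>G\<^esub> ee) [^]\<^bsub>K\<^esub> v"
      using ac bc by (simp add: W_def pi.hom_int_pow)
    also have "\<dots> = w r s t u v" unfolding w_def piD piE unfolding piC ..
    finally show ?thesis .
  qed
  have part1: "\<forall>k \<in> carrier K. \<exists>r s t u v. k = w r s t u v"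
  proof
    fix k assume "k \<in> carrier K"
    then obtain g where g: "g \<in> carrier G" "k = N #>\<^bsub>G\<^esub> g" unfolding K_def carrier_FactGroup by blast
    have "m > 0" "n > 0" by (simp_all add: m_def n_def)
    then obtain r s t u v where "g = W r s t u v" using W_collect[OF am _ bn _ gen g(1)] by blast
    then show "\<exists>r s t u v. k = w r s t u v" using piW g(2) by blast
  qed
  have wK: "w r s t u v = (N #>\<^bsub>G\<^esub> a) [^]\<^bsub>K\<^esub> r \<otimes>\<^bsub>K\<^esub> (N #>\<^bsub>G\<^esub> b) [^]\<^bsub>K\<^esub> s
       \<otimes>\<^bsub>K\<^esub> (N #>\<^bsub>G\<^esub> cc) [^]\<^bsub>K\<^esub> t \<otimes>\<^bsub>K\<^esub> (N #>\<^bsub>G\<^esub> dd) [^]\<^bsub>K\<^esub> u \<otimes>\<^bsub>K\<^esub> (N #>\<^bsub>G\<^esub> ee) [^]\<^bsub>K\<^esub> v"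
    for r s t u v unfolding w_def piD piE unfolding piC ..
  have kpow: "(N #>\<^bsub>G\<^esub> x) [^]\<^bsub>K\<^esub> (j::nat) = \<one>\<^bsub>K\<^esub>" if "x \<in> carrier G" "x [^]\<^bsub>G\<^esub> j \<in> N" for x j
    using pi.hom_nat_pow[OF that(1), of j] piN[OF that(2)] by simp
  have one_N: "\<one>\<^bsub>G\<^esub> \<in> N" using Nsub by (rule subgroup.one_closed)
  have kA: "(N #>\<^bsub>G\<^esub> a) [^]\<^bsub>K\<^esub> m = \<one>\<^bsub>K\<^esub>" using kpow[OF ac] am one_N by simp
  have kB: "(N #>\<^bsub>G\<^esub> b) [^]\<^bsub>K\<^esub> n = \<one>\<^bsub>K\<^esub>" using kpow[OF bc] bn one_N by simp
  have kC: "(N #>\<^bsub>G\<^esub> cc) [^]\<^bsub>K\<^esub> n = \<one>\<^bsub>K\<^esub>" using kpow[OF cc_c ccn] .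
  have kD: "(N #>\<^bsub>G\<^esub> dd) [^]\<^bsub>K\<^esub> q = \<one>\<^bsub>K\<^esub>" using kpow[OF dd_c ddq] .
  have kE: "(N #>\<^bsub>G\<^esub> ee) [^]\<^bsub>K\<^esub> q = \<one>\<^bsub>K\<^esub>" using kpow[OF ee_c eeq] .
  have im: "int m = 2 ^ \<alpha>" "int n = 2 ^ \<beta>" "int q = 2 ^ \<gamma>" by (simp_all add: m_def n_def q_def)
  have bkw: "w r s t u v = w r' s' t' u' v'"
    if "r mod 2 ^ \<alpha> = r' mod 2 ^ \<alpha> \<and> s mod 2 ^ \<beta> = s' mod 2 ^ \<beta> \<and> t mod 2 ^ \<beta> = t' mod 2 ^ \<beta> \<and>
              u mod 2 ^ \<gamma> = u' mod 2 ^ \<gamma> \<and> v mod 2 ^ \<gamma> = v' mod 2 ^ \<gamma>" for r s t u v r' s' t' u' v'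
  proof -
    have e1: "(N #>\<^bsub>G\<^esub> a) [^]\<^bsub>K\<^esub> r = (N #>\<^bsub>G\<^esub> a) [^]\<^bsub>K\<^esub> r'"
      by (rule group.pow_mod_eq[OF Kg _ kA]) (use that im ac in simp_all)
    have e2: "(N #>\<^bsub>G\<^esub> b) [^]\<^bsub>K\<^esub> s = (N #>\<^bsub>G\<^esub> b) [^]\<^bsub>K\<^esub> s'"
      by (rule group.pow_mod_eq[OF Kg _ kB]) (use that im bc in simp_all)
    have e3: "(N #>\<^bsub>G\<^esub> cc) [^]\<^bsub>K\<^esub> t = (N #>\<^bsub>G\<^esub> cc) [^]\<^bsub>K\<^esub> t'"
      by (rule group.pow_mod_eq[OF Kg _ kC]) (use that im in simp_all)
    have e4: "(N #>\<^bsub>G\<^esub> dd) [^]\<^bsub>K\<^esub> u = (N #>\<^bsub>G\<^esub> dd) [^]\<^bsub>K\<^esub> u'"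
      by (rule group.pow_mod_eq[OF Kg _ kD]) (use that im in simp_all)
    have e5: "(N #>\<^bsub>G\<^esub> ee) [^]\<^bsub>K\<^esub> v = (N #>\<^bsub>G\<^esub> ee) [^]\<^bsub>K\<^esub> v'"
      by (rule group.pow_mod_eq[OF Kg _ kE]) (use that im in simp_all)
    show ?thesis unfolding wK e1 e2 e3 e4 e5 ..
  qed
  interpret HM: hm "2 ^ \<alpha>" "2 ^ \<beta>" "2 ^ \<gamma>"
  proof
    show "(2::int) ^ \<beta> dvd 2 ^ \<alpha>" using assms(1) by (rule le_imp_power_dvd)
    have "(2::int) ^ Suc \<gamma> dvd 2 ^ \<beta>" using assms(4) by (intro le_imp_power_dvd) simp
    then show "2 * (2::int) ^ \<gamma> dvd 2 ^ \<beta>" by simp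
  qed simp_all
  obtain h where h: "h \<in> hom G HM.Hn" "h a = HM.xH" "h b = HM.yH"
    using univ[OF HM.group_Hn HM.nilp_Hn HM.xH_c HM.yH_c HM.xH_pow HM.yH_pow] im by blast
  interpret hh: group_hom G HM.Hn h
    unfolding group_hom_def group_hom_axioms_def using h(1) HM.group_Hn is_group by blast
  have hcc: "h cc = comm HM.Hn HM.xH HM.yH"
    unfolding cc_def using hom_comm[OF hh.group_hom_axioms ac bc] h by simp
  have hdd: "h dd = comm HM.Hn (comm HM.Hn HM.xH HM.yH) HM.xH"
    unfolding dd_def using hom_comm[OF hh.group_hom_axioms cc_c ac] h hcc by simp
  have hee: "h ee = comm HM.Hn (comm HM.Hn HM.xH HM.yH) HM.yH"
    unfolding ee_def using hom_comm[OF hh.group_hom_axioms cc_c bc] h hcc by simp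
  have hW: "h (W r s t u v) = to_nat (red (2 ^ \<alpha>) (2 ^ \<beta>) (2 ^ \<gamma>) (r, s, t, u, v))" for r s t u v
  proof -
    have "h (W r s t u v) = h a [^]\<^bsub>HM.Hn\<^esub> r \<otimes>\<^bsub>HM.Hn\<^esub> h b [^]\<^bsub>HM.Hn\<^esub> s \<otimes>\<^bsub>HM.Hn\<^esub> h cc [^]\<^bsub>HM.Hn\<^esub> t
       \<otimes>\<^bsub>HM.Hn\<^esub> h dd [^]\<^bsub>HM.Hn\<^esub> u \<otimes>\<^bsub>HM.Hn\<^esub> h ee [^]\<^bsub>HM.Hn\<^esub> v"
      using ac bc by (simp add: W_def hh.hom_int_pow)
    also have "\<dots> = to_nat (red (2 ^ \<alpha>) (2 ^ \<beta>) (2 ^ \<gamma>) (r, s, t, u, v))"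
      unfolding hdd hee hcc h(2,3) by (rule HM.word_Hn)
    finally show ?thesis .
  qed
  have ker: "N \<subseteq> kernel G HM.Hn h"
    unfolding Nd
  proof (rule generate_subgroup_incl[OF _ hh.subgroup_kernel])
    have "h (dd [^]\<^bsub>G\<^esub> q) = \<one>\<^bsub>HM.Hn\<^esub>"
      using hh.hom_nat_pow[OF dd_c, of q] HM.dH_pow im(3) by (simp add: hdd int_pow_int[symmetric] del: pow_nat)
    moreover have "h (ee [^]\<^bsub>G\<^esub> q) = \<one>\<^bsub>HM.Hn\<^esub>"
      using hh.hom_nat_pow[OF ee_c, of q] HM.eH_pow im(3) by (simp add: hee int_pow_int[symmetric] del: pow_nat)
    ultimately show "{dd [^]\<^bsub>G\<^esub> q, ee [^]\<^bsub>G\<^esub> q} \<subseteq> kernel G HM.Hn h"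
      unfolding kernel_def by auto
  qed
  have fwd: "r mod 2 ^ \<alpha> = r' mod 2 ^ \<alpha> \<and> s mod 2 ^ \<beta> = s' mod 2 ^ \<beta> \<and> t mod 2 ^ \<beta> = t' mod 2 ^ \<beta> \<and>
              u mod 2 ^ \<gamma> = u' mod 2 ^ \<gamma> \<and> v mod 2 ^ \<gamma> = v' mod 2 ^ \<gamma>"
    if eq: "w r s t u v = w r' s' t' u' v'" for r s t u v r' s' t' u' v'
  proof -
    define W1 where "W1 = W r s t u v"
    define W2 where "W2 = W r' s' t' u' v'"
    have W1c: "W1 \<in> carrier G" and W2c: "W2 \<in> carrier G" by (simp_all add: W1_def W2_def)
    have "N #>\<^bsub>G\<^esub> W1 = N #>\<^bsub>G\<^esub> W2" using eq piW by (simp add: W1_def W2_def)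
    then have "W1 \<in> N #>\<^bsub>G\<^esub> W2" using rcos_self[OF W1c Nsub] by simp
    then have "W1 \<otimes>\<^bsub>G\<^esub> inv\<^bsub>G\<^esub> W2 \<in> N" by (rule subgroup.rcos_module_imp[OF Nsub is_group W2c])
    then have "h (W1 \<otimes>\<^bsub>G\<^esub> inv\<^bsub>G\<^esub> W2) = \<one>\<^bsub>HM.Hn\<^esub>" using ker unfolding kernel_def by blast
    then have one: "h W1 \<otimes>\<^bsub>HM.Hn\<^esub> inv\<^bsub>HM.Hn\<^esub> (h W2) = \<one>\<^bsub>HM.Hn\<^esub>" using W1c W2c by simp
    have hc: "h W1 \<in> carrier HM.Hn" "h W2 \<in> carrier HM.Hn" using W1c W2c by simp_all
    have "h W1 = h W1 \<otimes>\<^bsub>HM.Hn\<^esub> (inv\<^bsub>HM.Hn\<^esub> (h W2) \<otimes>\<^bsub>HM.Hn\<^esub> h W2)" using hc by simp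
    also have "\<dots> = (h W1 \<otimes>\<^bsub>HM.Hn\<^esub> inv\<^bsub>HM.Hn\<^esub> (h W2)) \<otimes>\<^bsub>HM.Hn\<^esub> h W2"
      using hc by (simp add: hh.H.m_assoc)
    also have "\<dots> = h W2" unfolding one using hc by simp
    finally have "h W1 = h W2" .
    then have "to_nat (red (2 ^ \<alpha>) (2 ^ \<beta>) (2 ^ \<gamma>) (r, s, t, u, v)) = to_nat (red (2 ^ \<alpha>) (2 ^ \<beta>) (2 ^ \<gamma>) (r', s', t', u', v'))"
      unfolding W1_def W2_def hW .
    then show ?thesis by (rule HM.rd_inj)
  qed
  show ?thesis
  proof (intro conjI allI)
    show "\<forall>k \<in> carrier K. \<exists>r s t u v. k = w r s t u v" by (rule part1)
  next
    fix r s t u v r' s' t' u' v'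
    show "w r s t u v = w r' s' t' u' v' \<longleftrightarrow>
              r mod 2 ^ \<alpha> = r' mod 2 ^ \<alpha> \<and> s mod 2 ^ \<beta> = s' mod 2 ^ \<beta> \<and> t mod 2 ^ \<beta> = t' mod 2 ^ \<beta> \<and>
              u mod 2 ^ \<gamma> = u' mod 2 ^ \<gamma> \<and> v mod 2 ^ \<gamma> = v' mod 2 ^ \<gamma>"
      by (rule iffI) (erule fwd, erule bkw)
  qed
qed


end
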